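(* Let $M>0$ and $0\le a<M$, and set $r_+=M+\sqrt{M^2-a^2}$, $\Delta(r)=r^2-2Mr+a^2$. Let $E,L_z,Q\in\mathbb{R}$ with $Q<0$ be such that there exists $\theta\in(0,\pi)$ with $\Theta(\theta,E,L_z,Q)\ge 0$, where $$\Theta(\theta,E,L_z,Q)=Q-\Big(\frac{L_z^2}{\sin^2\theta}-E^2a^2\Big)\cos^2\theta .$$ Let $K=Q+(aE-L_z)^2$ and $$R(r)=\big((r^2+a^2)E-aL_z\big)^2-\Delta(r)K = E^2r^4+(a^2E^2-Q-L_z^2)r^2+2MKr-a^2Q.$$ Then $R(r)>0$ for all $r\in(r_+,\infty)$.
   Context: This concerns null geodesics in the exterior region $r>r_+$ of a sub-extremal Kerr spacetime of mass $M$ and rotation parameter $a$, written in Boyer–Lindquist coordinates $(t,r,\theta,\phi)$. For a null geodesic with affine parameter, $E=-g(\partial_t,\dot\gamma)$ is the energy, $L_z=g(\partial_\phi,\dot\gamma)$ the axial angular momentum, $K$ Carter's constant and $Q=K-(aE-L_z)^2$; with $\Sigma=r^2+a^2\cos^2\theta$ these satisfy $\Sigma^2\dot r^2=R(r)$ and $\Sigma^2\dot\theta^2=\Theta(\theta,E,L_z,Q)$, so a null geodesic with these constants can only pass through points where $\Theta\ge 0$. *)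

theory Defs
  imports Complex_Main
begin

definition r_plus :: "real \<Rightarrow> real \<Rightarrow> real" where
  "r_plus M a = M + sqrt (M\<^sup>2 - a\<^sup>2)"

definition Delta :: "real \<Rightarrow> real \<Rightarrow> real \<Rightarrow> real" where
  "Delta M a r = r\<^sup>2 - 2 * M * r + a\<^sup>2"

definition Theta :: "real \<Rightarrow> real \<Rightarrow> real \<Rightarrow> real \<Rightarrow> real \<Rightarrow> real" where
  "Theta a \<theta> E Lz Q = Q - (Lz\<^sup>2 / (sin \<theta>)\<^sup>2 - E\<^sup>2 * a\<^sup>2) * (cos \<theta>)\<^sup>2"

definition Carter_K :: "real \<Rightarrow> real \<Rightarrow> real \<Rightarrow> real \<Rightarrow> real" where
  "Carter_K a E Lz Q = Q + (a * E - Lz)\<^sup>2"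

definition Rpot :: "real \<Rightarrow> real \<Rightarrow> real \<Rightarrow> real \<Rightarrow> real \<Rightarrow> real \<Rightarrow> real" where
  "Rpot M a E Lz Q r = ((r\<^sup>2 + a\<^sup>2) * E - a * Lz)\<^sup>2 - Delta M a r * Carter_K a E Lz Q"

end

theory Submission
  imports Defs
begin

theorem lemma1:
  fixes M a E Lz Q :: real
  assumes "M > 0" and "0 \<le> a" and "a < M"
    and "Q < 0"
    and "\<exists>\<theta>. 0 < \<theta> \<and> \<theta> < pi \<and> Theta a \<theta> E Lz Q \<ge> 0"
  shows "\<forall>r. r > r_plus M a \<longrightarrow> Rpot M a E Lz Q r > 0"
proof (intro allI impI)
  fix r assume r: "r > r_plus M a"
  obtain t where t: "0 < t" "t < pi" "Theta a t E Lz Q \<ge> 0" using assms(5) by blast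
  define s where "s = (sin t)\<^sup>2"
  define c where "c = (cos t)\<^sup>2"
  have sp: "s > 0" using sin_gt_zero[OF t(1) t(2)] unfolding s_def by simp
  have s1: "s \<le> 1" unfolding s_def using sin_le_one abs_sin_le_one
    by (simp add: abs_square_le_1)
  have c0: "c \<ge> 0" unfolding c_def by simp
  have th: "(Lz\<^sup>2 / s - E\<^sup>2 * a\<^sup>2) * c \<le> Q" using t(3) unfolding Theta_def s_def c_def by simp
  have X: "Lz\<^sup>2 / s - E\<^sup>2 * a\<^sup>2 < 0"
  proof (rule ccontr)
    assume "\<not> ?thesis"
    hence "(Lz\<^sup>2 / s - E\<^sup>2 * a\<^sup>2) * c \<ge> 0" using c0 by simp
    thus False using th assms(4) by linarith
  qed
  hence "Lz\<^sup>2 / s < E\<^sup>2 * a\<^sup>2" by simp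
  hence "Lz\<^sup>2 < E\<^sup>2 * a\<^sup>2 * s" using sp by (simp add: divide_less_eq)
  moreover have "E\<^sup>2 * a\<^sup>2 * s \<le> E\<^sup>2 * a\<^sup>2" using s1 by (simp add: mult_left_le)
  ultimately have L: "Lz\<^sup>2 < E\<^sup>2 * a\<^sup>2" by linarith
  have ma: "M\<^sup>2 - a\<^sup>2 \<ge> 0" using assms(2,3) power_mono[of a M 2] by simp
  have sq: "sqrt (M\<^sup>2 - a\<^sup>2) \<ge> 0" "(sqrt (M\<^sup>2 - a\<^sup>2))\<^sup>2 = M\<^sup>2 - a\<^sup>2"
    using ma by auto
  have rm: "r - M > sqrt (M\<^sup>2 - a\<^sup>2)" using r unfolding r_plus_def by simp
  hence "(r - M)\<^sup>2 > (sqrt (M\<^sup>2 - a\<^sup>2))\<^sup>2" using sq(1)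
    by (meson power_strict_mono zero_less_numeral)
  hence D: "Delta M a r > 0" using sq(2) unfolding Delta_def by (simp add: power2_eq_square algebra_simps)
  have rpos: "r > 0" using rm sq(1) assms(1) by linarith
  have eq: "Rpot M a E Lz Q r = E\<^sup>2 * r^4 + (a\<^sup>2*E\<^sup>2 - Lz\<^sup>2) * r\<^sup>2 + (-Q) * Delta M a r + 2*M*r*(a*E-Lz)\<^sup>2"
    unfolding Rpot_def Delta_def Carter_K_def by (simp add: power2_eq_square power4_eq_xxxx algebra_simps)
  have "(a\<^sup>2*E\<^sup>2 - Lz\<^sup>2) * r\<^sup>2 > 0" using L rpos by (simp add: algebra_simps)
  moreover have "(-Q) * Delta M a r > 0" using D assms(4) by (simp add: mult_neg_pos)
  moreover have "E\<^sup>2 * r^4 \<ge> 0" by simp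
  moreover have "2*M*r*(a*E-Lz)\<^sup>2 \<ge> 0" using rpos assms(1) by simp
  ultimately show "Rpot M a E Lz Q r > 0" unfolding eq by linarith
qed

end
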